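(* Let $N\ge3$, $K\ge2$, $1\le L<N-1$ be integers, $M=N(L+1)^{K-1}$, $d_m=L$ for $m\in[1:N]$ and $d_m=L+1$ for $m\in[N+1:M]$, $C=\left(\sum_{k=0}^{K-1}N^{-k}\right)^{-1}$, and $1\le D\le1/C$. Let $\mathcal{F}_D$ be the set of probability vectors $P$ on $[1:M]$ with $\frac1L\sum_{m=1}^Mp_md_m=D$ and $U$ the uniform distribution on $[1:M]$. Then $\rho^{alt}_\alpha:=\min_{P\in\mathcal{F}_D}D_\alpha(P\|U)$ equals, for $0<\alpha<\infty$, $\alpha\ne1$, $$\rho^{alt}_\alpha=\frac{1}{\alpha-1}\log\left[N\left(\frac{1-L(D-1)}{N}\right)^{\alpha}+\big(N(L+1)^{K-1}-N\big)\left(\frac{L(D-1)}{N(L+1)^{K-1}-N}\right)^{\alpha}\right]+\log N(L+1)^{K-1};$$ for $\alpha=1$, $$\rho^{alt}_1=\{1-L(D-1)\}\log\frac{1-L(D-1)}{N}+L(D-1)\log\frac{L(D-1)}{N(L+1)^{K-1}-N}+\log N(L+1)^{K-1};$$ and for $\alpha=\infty$, $$\rho^{alt}_\infty=\log\frac{1-L(D-1)}{N}+\log N(L+1)^{K-1}.$$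
   Context: Notation: $[i:j]=\{i,\dots,j\}$; natural logarithms with $0\log0=0$. Rényi divergence for probability vectors $P,U$ on $[1:M]$ with $u_m>0$: $D_\alpha(P\|U)=\frac{1}{\alpha-1}\log\sum_m p_m^\alpha u_m^{1-\alpha}$ for $0<\alpha<\infty,\alpha\ne1$; $D_1(P\|U)=\sum_m p_m\log\frac{p_m}{u_m}$; $D_\infty(P\|U)=\log\max_m\frac{p_m}{u_m}$. (Interpretation: optimal leakage–download-cost tradeoff for the paper's alternative PIR scheme with $N$ databases, $K$ messages and message length $L$.) *)

theory Defs
  imports "HOL-Analysis.Analysis"
begin

text \<open>Probability vectors on [1:M], represented as functions nat => real
  (values outside {1..M} are irrelevant).\<close>
definition prob_vec :: "nat \<Rightarrow> (nat \<Rightarrow> real) \<Rightarrow> bool" where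
  "prob_vec M P \<longleftrightarrow> (\<forall>m\<in>{1..M}. P m \<ge> 0) \<and> (\<Sum>m=1..M. P m) = 1"

definition renyi_div :: "ereal \<Rightarrow> nat \<Rightarrow> (nat \<Rightarrow> real) \<Rightarrow> (nat \<Rightarrow> real) \<Rightarrow> real" where
  "renyi_div \<alpha> M P U =
    (if \<alpha> = \<infinity> then ln (Max ((\<lambda>m. P m / U m) ` {1..M}))
     else if \<alpha> = 1 then (\<Sum>m=1..M. (if P m = 0 then 0 else P m * ln (P m / U m)))
     else 1 / (real_of_ereal \<alpha> - 1) *
            ln (\<Sum>m=1..M. P m powr real_of_ereal \<alpha> * U m powr (1 - real_of_ereal \<alpha>)))"

definition dvec :: "nat \<Rightarrow> nat \<Rightarrow> nat \<Rightarrow> real" where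
  "dvec N L m = (if m \<le> N then real L else real L + 1)"

definition feasible :: "nat \<Rightarrow> nat \<Rightarrow> nat \<Rightarrow> real \<Rightarrow> (nat \<Rightarrow> real) set" where
  "feasible N L M D = {P. prob_vec M P \<and> (1 / real L) * (\<Sum>m=1..M. P m * dvec N L m) = D}"

definition uniform :: "nat \<Rightarrow> nat \<Rightarrow> real" where
  "uniform M m = 1 / real M"

definition is_min_val :: "('a \<Rightarrow> real) \<Rightarrow> 'a set \<Rightarrow> real \<Rightarrow> bool" where
  "is_min_val f S x \<longleftrightarrow> (\<exists>P\<in>S. f P = x) \<and> (\<forall>P\<in>S. x \<le> f P)"

end

theory Submission
  imports Defs
begin

lemma split_sum_nat:
  assumes "N \<le> M"
  shows "(\<Sum>m=1..M. f m) = (\<Sum>m=1..N. f m) + (\<Sum>m=Suc N..M. (f m::real))"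
proof -
  have "{1..M} = {1..N} \<union> {Suc N..M}" using assms by auto
  moreover have "{1..N} \<inter> {Suc N..M} = {}" by auto
  ultimately show ?thesis by (simp add: sum.union_disjoint)
qed

lemma tangent_gt1:
  fixes a c x :: real
  assumes "1 < a" "0 < c" "0 \<le> x"
  shows "c powr a + a * c powr (a-1) * (x-c) \<le> x powr a"
proof (cases "x = 0")
  case True
  have h: "c powr (a-1) * c = c powr a" using assms by (simp add: powr_diff)
  have "c powr a + a * c powr (a-1) * (x - c) = c powr a - a * (c powr (a-1) * c)"
    using True by (simp add: algebra_simps)
  also have "\<dots> = (1 - a) * c powr a" unfolding h by (simp add: algebra_simps)
  also have "\<dots> \<le> 0" using assms by (simp add: mult_nonpos_nonneg)
  finally show ?thesis using True by simp
next
  case False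
  have cv: "convex_on {0<..} (\<lambda>x::real. x powr a)" using powr_convex assms by simp
  have "(\<lambda>x. x powr a) x - (\<lambda>x. x powr a) c \<ge> (a * c powr (a-1)) * (x - c)"
  proof (rule convex_on_imp_above_tangent[OF cv])
    show "connected {0::real<..}" by (rule convex_connected) simp
    show "c \<in> interior {0<..}" using assms by (simp add: interior_open)
    show "x \<in> {0<..}" using assms False by simp
    show "((\<lambda>x. x powr a) has_field_derivative a * c powr (a-1)) (at c within {0<..})"
      by (rule has_field_derivative_at_within, rule has_real_derivative_powr) (use assms in simp)
  qed
  thus ?thesis by simp
qed

lemma tangent_lt1:
  fixes a c x :: real
  assumes "0 < a" "a < 1" "0 < c" "0 \<le> x"
  shows "x powr a \<le> c powr a + a * c powr (a-1) * (x-c)"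
proof (cases "x = 0")
  case True
  have h: "c powr (a-1) * c = c powr a" using assms by (simp add: powr_diff)
  have "c powr a + a * c powr (a-1) * (x - c) = c powr a - a * (c powr (a-1) * c)"
    using True by (simp add: algebra_simps)
  also have "\<dots> = (1 - a) * c powr a" unfolding h by (simp add: algebra_simps)
  finally have e: "c powr a + a * c powr (a-1) * (x - c) = (1 - a) * c powr a" .
  have "0 \<le> (1 - a) * c powr a" using assms by simp
  thus ?thesis using True e by simp
next
  case False
  have cc: "concave_on {0<..} (\<lambda>x::real. x powr a)"
  proof (rule f''_le0_imp_concave[where f' = "\<lambda>x. a * x powr (a-1)" and f'' = "\<lambda>x. a * ((a-1) * x powr (a-1-1))"])
    show "convex {0::real<..}" by simp
    fix x :: real assume x: "x \<in> {0<..}"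
    show "((\<lambda>x. x powr a) has_real_derivative a * x powr (a - 1)) (at x)"
      by (rule has_real_derivative_powr) (use x in simp)
    show "((\<lambda>x. a * x powr (a - 1)) has_real_derivative a * ((a - 1) * x powr (a - 1 - 1))) (at x)"
    proof (rule DERIV_cmult)
      show "((\<lambda>x. x powr (a - 1)) has_real_derivative (a - 1) * x powr (a - 1 - 1)) (at x)"
        by (rule has_real_derivative_powr) (use x in simp)
    qed
    have "(a - 1) * x powr (a - 1 - 1) \<le> 0" using assms x by (simp add: mult_nonpos_nonneg)
    thus "a * ((a - 1) * x powr (a - 1 - 1)) \<le> 0" using assms by (simp add: mult_nonneg_nonpos)
  qed
  have cv: "convex_on {0<..} (\<lambda>x::real. - (x powr a))" using cc by (simp add: concave_on_def)
  have "(\<lambda>x. - (x powr a)) x - (\<lambda>x. - (x powr a)) c \<ge> (- (a * c powr (a-1))) * (x - c)"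
  proof (rule convex_on_imp_above_tangent[OF cv])
    show "connected {0::real<..}" by (rule convex_connected) simp
    show "c \<in> interior {0<..}" using assms by (simp add: interior_open)
    show "x \<in> {0<..}" using assms False by simp
    show "((\<lambda>x. - (x powr a)) has_field_derivative - (a * c powr (a-1))) (at c within {0<..})"
      by (rule has_field_derivative_at_within, rule DERIV_minus, rule has_real_derivative_powr) (use assms in simp)
  qed
  thus ?thesis by simp
qed

definition xlx :: "real \<Rightarrow> real" where "xlx x = (if x = 0 then 0 else x * ln x)"

lemma tangent_xlx:
  fixes c x :: real
  assumes "0 < c" "0 \<le> x"
  shows "c * ln c + (ln c + 1) * (x - c) \<le> xlx x"
proof (cases "x = 0")
  case True
  have "c * ln c + (ln c + 1) * (x - c) = - c" using True by (simp add: algebra_simps)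
  thus ?thesis using True assms by (simp add: xlx_def)
next
  case False
  have cv: "convex_on {0<..} (\<lambda>x::real. x * ln x)"
  proof (rule f''_ge0_imp_convex[where f' = "\<lambda>x. ln x + 1" and f'' = "\<lambda>x. 1 / x"])
    show "convex {0::real<..}" by simp
    fix x :: real assume x: "x \<in> {0<..}"
    have "((\<lambda>x. x * ln x) has_real_derivative (x * (1 / x) + 1 * ln x)) (at x)"
      by (rule DERIV_mult', rule DERIV_ident, rule DERIV_ln_divide) (use x in simp)
    thus "((\<lambda>x. x * ln x) has_real_derivative ln x + 1) (at x)" using x by (simp add: add.commute)
    have "((\<lambda>x. ln x + 1) has_real_derivative 1 / x + 0) (at x)"
      by (rule DERIV_add, rule DERIV_ln_divide, use x in simp, rule DERIV_const)
    thus "((\<lambda>x. ln x + 1) has_real_derivative 1 / x) (at x)" by simp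
    show "0 \<le> 1 / x" using x by simp
  qed
  have "(\<lambda>x. x * ln x) x - (\<lambda>x. x * ln x) c \<ge> (ln c + 1) * (x - c)"
  proof (rule convex_on_imp_above_tangent[OF cv])
    show "connected {0::real<..}" by (rule convex_connected) simp
    show "c \<in> interior {0<..}" using assms by (simp add: interior_open)
    show "x \<in> {0<..}" using assms False by simp
    have "((\<lambda>x. x * ln x) has_real_derivative (c * (1 / c) + 1 * ln c)) (at c)"
      by (rule DERIV_mult', rule DERIV_ident, rule DERIV_ln_divide) (use assms in simp)
    hence "((\<lambda>x. x * ln x) has_real_derivative ln c + 1) (at c)" using assms by (simp add: add.commute)
    thus "((\<lambda>x. x * ln x) has_field_derivative ln c + 1) (at c within {0<..})"
      by (rule has_field_derivative_at_within)
  qed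
  thus ?thesis using False by (simp add: xlx_def)
qed

lemma group_gen:
  fixes p :: "'i \<Rightarrow> real" and G d :: real and h :: "real \<Rightarrow> real"
  assumes fin: "finite S" and ne: "S \<noteq> {}" and nn: "\<And>i. i \<in> S \<Longrightarrow> 0 \<le> p i"
    and tang: "\<And>x. 0 \<le> x \<Longrightarrow> G + d * (x - sum p S / card S) \<le> h x"
  shows "card S * G \<le> (\<Sum>i\<in>S. h (p i))"
proof -
  let ?c = "sum p S / card S"
  have n: "real (card S) > 0" using fin ne by (simp add: card_gt_0_iff)
  have "(\<Sum>i\<in>S. G + d * (p i - ?c)) \<le> (\<Sum>i\<in>S. h (p i))"
    by (rule sum_mono) (use tang nn in blast)
  moreover have "(\<Sum>i\<in>S. G + d * (p i - ?c)) = card S * G + d * (sum p S - card S * ?c)"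
    by (simp add: sum.distrib sum_subtractf sum_distrib_left[symmetric])
  moreover have "card S * ?c = sum p S" using n by simp
  ultimately show ?thesis by simp
qed

lemma group_zero:
  fixes p :: "'i \<Rightarrow> real"
  assumes fin: "finite S" and nn: "\<And>i. i \<in> S \<Longrightarrow> 0 \<le> p i" and z: "sum p S = 0"
  shows "\<And>i. i \<in> S \<Longrightarrow> p i = 0"
  using sum_nonneg_eq_0_iff[OF fin] nn z by blast


lemma group_gt1:
  fixes p :: "'i \<Rightarrow> real"
  assumes fin: "finite S" and ne: "S \<noteq> {}" and nn: "\<And>i. i \<in> S \<Longrightarrow> 0 \<le> p i" and a: "1 < a"
  shows "card S * (sum p S / card S) powr a \<le> (\<Sum>i\<in>S. p i powr a)"
proof (cases "sum p S = 0")
  case True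
  thus ?thesis using group_zero[OF fin nn True] by simp
next
  case False
  hence pos: "0 < sum p S" using sum_nonneg nn by (metis order_le_less)
  have n: "real (card S) > 0" using fin ne by (simp add: card_gt_0_iff)
  show ?thesis
    apply (rule group_gen[where d = "a * (sum p S / card S) powr (a-1)" and G = "(sum p S / card S) powr a" and h = "\<lambda>x. x powr a"])
    using fin ne nn pos tangent_gt1[OF a, of "sum p S / card S"] n by auto
qed

lemma group_lt1:
  fixes p :: "'i \<Rightarrow> real"
  assumes fin: "finite S" and ne: "S \<noteq> {}" and nn: "\<And>i. i \<in> S \<Longrightarrow> 0 \<le> p i" and a: "0 < a" "a < 1"
  shows "(\<Sum>i\<in>S. p i powr a) \<le> card S * (sum p S / card S) powr a"
proof (cases "sum p S = 0")
  case True
  thus ?thesis using group_zero[OF fin nn True] by simp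
next
  case False
  hence pos: "0 < sum p S" using sum_nonneg nn by (metis order_le_less)
  have n: "real (card S) > 0" using fin ne by (simp add: card_gt_0_iff)
  have "card S * (- ((sum p S / card S) powr a)) \<le> (\<Sum>i\<in>S. - (p i powr a))"
    apply (rule group_gen[where d = "- (a * (sum p S / card S) powr (a-1))" and G = "- ((sum p S / card S) powr a)" and h = "\<lambda>x. - (x powr a)"])
    using fin ne nn pos tangent_lt1[OF a, of "sum p S / card S"] n by (auto simp: algebra_simps)
  thus ?thesis by (simp add: sum_negf)
qed

lemma group_xlx:
  fixes p :: "'i \<Rightarrow> real"
  assumes fin: "finite S" and ne: "S \<noteq> {}" and nn: "\<And>i. i \<in> S \<Longrightarrow> 0 \<le> p i"
  shows "(if sum p S = 0 then 0 else sum p S * ln (sum p S / card S)) \<le> (\<Sum>i\<in>S. xlx (p i))"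
proof (cases "sum p S = 0")
  case True
  thus ?thesis using group_zero[OF fin nn True] by (simp add: xlx_def)
next
  case False
  hence pos: "0 < sum p S" using sum_nonneg nn by (metis order_le_less)
  have n: "real (card S) > 0" using fin ne by (simp add: card_gt_0_iff)
  have "card S * ((sum p S / card S) * ln (sum p S / card S)) \<le> (\<Sum>i\<in>S. xlx (p i))"
    apply (rule group_gen[where d = "ln (sum p S / card S) + 1" and G = "(sum p S / card S) * ln (sum p S / card S)" and h = xlx])
    using fin ne nn pos tangent_xlx[of "sum p S / card S"] n by auto
  thus ?thesis using False n by simp
qed


lemma geo_bound:
  fixes x y :: real
  assumes "0 \<le> x" "x \<le> y" "y * (real L + 1) = 1"
  shows "real L * ((\<Sum>k<Suc n. x ^ k) - 1) \<le> 1 - y ^ n"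
proof (induction n)
  case 0
  then show ?case by simp
next
  case (Suc n)
  have y0: "0 \<le> y" using assms by simp
  have "x ^ Suc n \<le> y ^ Suc n" by (rule power_mono) (use assms in auto)
  hence "real L * x ^ Suc n \<le> real L * y ^ Suc n" by (simp add: mult_left_mono)
  moreover have "y ^ n - y ^ Suc n = real L * y ^ Suc n"
  proof -
    have h: "1 - y = real L * y" using assms(3) by (simp add: algebra_simps)
    have "y ^ n - y ^ Suc n = y ^ n * (1 - y)" by (simp add: algebra_simps)
    also have "\<dots> = y ^ n * (real L * y)" by (simp only: h)
    also have "\<dots> = real L * y ^ Suc n" by (simp add: algebra_simps)
    finally show ?thesis .
  qed
  ultimately show ?case using Suc.IH by (simp add: algebra_simps)
qed

lemma feas_iff:
  assumes "N \<le> M" "0 < L"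
  shows "P \<in> feasible N L M D \<longleftrightarrow> prob_vec M P \<and> (\<Sum>m=Suc N..M. P m) = real L * (D - 1)"
proof -
  have "(\<Sum>m=1..M. P m * dvec N L m) = (\<Sum>m=1..N. P m * dvec N L m) + (\<Sum>m=Suc N..M. P m * dvec N L m)"
    by (rule split_sum_nat[OF assms(1)])
  also have "(\<Sum>m=1..N. P m * dvec N L m) = (\<Sum>m=1..N. P m * real L)"
    by (rule sum.cong) (auto simp: dvec_def)
  also have "(\<Sum>m=Suc N..M. P m * dvec N L m) = (\<Sum>m=Suc N..M. P m * real L + P m)"
    by (rule sum.cong) (auto simp: dvec_def algebra_simps)
  finally have e: "(\<Sum>m=1..M. P m * dvec N L m) = real L * ((\<Sum>m=1..N. P m) + (\<Sum>m=Suc N..M. P m)) + (\<Sum>m=Suc N..M. P m)"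
    by (simp add: sum.distrib sum_distrib_left mult.commute distrib_left)
  have s: "(\<Sum>m=1..M. P m) = (\<Sum>m=1..N. P m) + (\<Sum>m=Suc N..M. P m)"
    by (rule split_sum_nat[OF assms(1)])
  have key: "(1 / real L) * (\<Sum>m=1..M. P m * dvec N L m) = D \<longleftrightarrow> (\<Sum>m=Suc N..M. P m) = real L * (D - 1)"
    if one: "(\<Sum>m=1..M. P m) = 1"
  proof -
    have "(\<Sum>m=1..M. P m * dvec N L m) = real L + (\<Sum>m=Suc N..M. P m)" using e s one by simp
    thus ?thesis using assms(2) by (auto simp: field_simps)
  qed
  show ?thesis using key unfolding feasible_def prob_vec_def by auto
qed

lemma renyi_alpha:
  assumes "0 < \<alpha>" "\<alpha> \<noteq> 1" "0 < M" "0 < (\<Sum>m=1..M. P m powr \<alpha>)"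
  shows "renyi_div (ereal \<alpha>) M P (uniform M) = 1 / (\<alpha> - 1) * ln (\<Sum>m=1..M. P m powr \<alpha>) + ln (real M)"
proof -
  have "(\<Sum>m=1..M. P m powr \<alpha> * uniform M m powr (1 - \<alpha>)) = (1 / real M) powr (1 - \<alpha>) * (\<Sum>m=1..M. P m powr \<alpha>)"
    by (simp add: uniform_def sum_distrib_left algebra_simps)
  moreover have "ln ((1 / real M) powr (1 - \<alpha>) * (\<Sum>m=1..M. P m powr \<alpha>)) = (\<alpha> - 1) * ln (real M) + ln (\<Sum>m=1..M. P m powr \<alpha>)"
    using assms by (simp add: ln_mult ln_powr ln_div algebra_simps)
  ultimately show ?thesis using assms
    by (simp add: renyi_div_def field_simps)
qed

lemma renyi_one:
  assumes "0 < M" "prob_vec M P"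
  shows "renyi_div 1 M P (uniform M) = (\<Sum>m=1..M. xlx (P m)) + ln (real M)"
proof -
  have "(\<Sum>m=1..M. (if P m = 0 then 0 else P m * ln (P m / uniform M m))) = (\<Sum>m=1..M. xlx (P m) + P m * ln (real M))"
  proof (rule sum.cong)
    fix m assume "m \<in> {1..M}"
    hence "P m \<ge> 0" using assms by (simp add: prob_vec_def)
    thus "(if P m = 0 then 0 else P m * ln (P m / uniform M m)) = xlx (P m) + P m * ln (real M)"
      using assms by (auto simp: xlx_def uniform_def ln_mult algebra_simps)
  qed simp
  also have "\<dots> = (\<Sum>m=1..M. xlx (P m)) + ln (real M)"
    using assms by (simp add: sum.distrib sum_distrib_right[symmetric] prob_vec_def)
  finally show ?thesis by (simp add: renyi_div_def)
qed

lemma renyi_inf: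
  shows "renyi_div \<infinity> M P (uniform M) = ln (Max ((\<lambda>m. P m * real M) ` {1..M}))"
  by (simp add: renyi_div_def uniform_def)

theorem theorem2:
  fixes N K L :: nat and D :: real
  assumes "N \<ge> 3" and "K \<ge> 2" and "1 \<le> L" and "L < N - 1"
  defines "M \<equiv> N * (L + 1) ^ (K - 1)"
  defines "C \<equiv> 1 / (\<Sum>k<K. 1 / real N ^ k)"
  assumes "1 \<le> D" and "D \<le> 1 / C"
  shows
    "(\<forall>\<alpha>::real. 0 < \<alpha> \<and> \<alpha> \<noteq> 1 \<longrightarrow>
        is_min_val (\<lambda>P. renyi_div (ereal \<alpha>) M P (uniform M)) (feasible N L M D)
          (1 / (\<alpha> - 1) *
             ln (real N * ((1 - real L * (D - 1)) / real N) powr \<alpha>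
                 + (real M - real N) * ((real L * (D - 1)) / (real M - real N)) powr \<alpha>)
           + ln (real M)))
     \<and> is_min_val (\<lambda>P. renyi_div 1 M P (uniform M)) (feasible N L M D)
          ((1 - real L * (D - 1)) * ln ((1 - real L * (D - 1)) / real N)
           + (if real L * (D - 1) = 0 then 0
              else real L * (D - 1) * ln ((real L * (D - 1)) / (real M - real N)))
           + ln (real M))
     \<and> is_min_val (\<lambda>P. renyi_div \<infinity> M P (uniform M)) (feasible N L M D)
          (ln ((1 - real L * (D - 1)) / real N) + ln (real M))"
proof -
  define q where "q = real L * (D - 1)"
  define a where "a = (1 - q) / real N"
  define b where "b = q / (real M - real N)"
  define F where "F = feasible N L M D"
  define P0 where "P0 = (\<lambda>m::nat. if m \<le> N then a else b)"
  have e0: "real L * (D - 1) = q" by (simp add: q_def)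
  have e1: "(1 - q) / real N = a" by (simp add: a_def)
  have e2: "q / (real M - real N) = b" by (simp add: b_def)
  have Npos: "0 < N" "0 < real N" using assms(1) by auto
  have Lpos: "0 < L" using assms(3) by simp
  have pw: "(L+1)^1 \<le> (L+1)^(K-1)" by (rule power_increasing) (use assms(2) in auto)
  hence pw2: "2 \<le> (L+1)^(K-1)" using assms(3) by simp
  have Mr: "real M = real N * (real L + 1) ^ (K - 1)" by (simp add: M_def ac_simps)
  have NM: "N \<le> M" using pw2 Npos unfolding M_def by simp
  have MN: "0 < real M - real N"
  proof -
    have "real N * 2 \<le> real N * (real L + 1) ^ (K - 1)"
      using pw2 Npos by (metis mult_left_mono of_nat_0_le_iff of_nat_1 of_nat_add of_nat_le_iff of_nat_numeral of_nat_power)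
    thus ?thesis using Mr Npos by simp
  qed
  have Mpos: "0 < M" using NM Npos by simp
  have cardA: "card {1..N} = N" by simp
  have cardB: "real (card {Suc N..M}) = real M - real N" using NM by simp
  have q0: "0 \<le> q" using assms(3,7) by (simp add: q_def)
  define y where "y = 1 / (real L + 1)"
  have ypos: "0 < y" by (simp add: y_def)
  have qb: "q \<le> 1 - y ^ (K - 1)"
  proof -
    have "1 / real N \<le> y" unfolding y_def using assms(4) Npos
      by (simp add: frac_le)
    hence "real L * ((\<Sum>k<Suc (K-1). (1 / real N) ^ k) - 1) \<le> 1 - y ^ (K - 1)"
      by (intro geo_bound) (auto simp: y_def)
    moreover have "Suc (K - 1) = K" using assms(2) by simp
    moreover have "D - 1 \<le> (\<Sum>k<K. (1 / real N) ^ k) - 1"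
      using assms(8) unfolding C_def by (simp add: power_one_over)
    ultimately show ?thesis unfolding q_def
      by (smt (verit) Lpos mult_left_mono of_nat_0_le_iff)
  qed
  have q1: "q < 1" using qb zero_less_power[OF ypos, of "K-1"] by linarith
  have apos: "0 < a" using q1 Npos by (simp add: a_def)
  have b0: "0 \<le> b" using q0 MN by (simp add: b_def)
  have yM: "y ^ (K - 1) = real N / real M"
    using Mr Npos by (simp add: y_def power_one_over)
  have ba: "b \<le> a"
  proof -
    have "q * real M \<le> (1 - y ^ (K - 1)) * real M" using qb Mpos by (intro mult_right_mono) auto
    also have "\<dots> = real M - real N" using yM Mpos by (simp add: field_simps)
    finally have "q * real M \<le> real M - real N" .
    hence "q * real N \<le> (1 - q) * (real M - real N)" by (simp add: algebra_simps)
    thus ?thesis unfolding a_def b_def using MN Npos by (simp add: field_simps)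
  qed
  have feas: "P \<in> F \<longleftrightarrow> prob_vec M P \<and> (\<Sum>m=Suc N..M. P m) = q" for P
    unfolding F_def q_def using feas_iff[OF NM Lpos] by simp
  have sA: "(\<Sum>m=1..N. P m) = 1 - q" if "P \<in> F" for P
    using that feas[of P] split_sum_nat[OF NM, of P] by (simp add: prob_vec_def)
  have nnA: "0 \<le> P m" if "P \<in> F" "m \<in> {1..M}" for P m
    using that feas[of P] by (simp add: prob_vec_def)
  have P0A: "(\<Sum>m=1..N. g (P0 m)) = real N * g a" for g :: "real \<Rightarrow> real"
    by (simp add: P0_def)
  have P0B: "(\<Sum>m=Suc N..M. g (P0 m)) = (real M - real N) * g b" for g :: "real \<Rightarrow> real"
  proof -
    have "(\<Sum>m=Suc N..M. g (P0 m)) = (\<Sum>m=Suc N..M. g b)" by (rule sum.cong) (auto simp: P0_def)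
    thus ?thesis using cardB by simp
  qed
  have P0F: "P0 \<in> F"
  proof -
    have "(\<Sum>m=Suc N..M. P0 m) = q" using P0B[of "\<lambda>x. x"] MN by (simp add: b_def)
    moreover have "(\<Sum>m=1..N. P0 m) = 1 - q" using P0A[of "\<lambda>x. x"] Npos by (simp add: a_def)
    ultimately show ?thesis unfolding feas prob_vec_def
      using split_sum_nat[OF NM, of P0] apos b0 by (auto simp: P0_def)
  qed
  have partA: "is_min_val (\<lambda>P. renyi_div (ereal \<alpha>) M P (uniform M)) F
          (1 / (\<alpha> - 1) * ln (real N * a powr \<alpha> + (real M - real N) * b powr \<alpha>) + ln (real M))"
    if al: "0 < \<alpha>" "\<alpha> \<noteq> 1" for \<alpha>
  proof -
    let ?T = "real N * a powr \<alpha> + (real M - real N) * b powr \<alpha>"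
    have Tpos: "0 < ?T" using apos Npos MN b0 by (simp add: add_pos_nonneg)
    have S0: "(\<Sum>m=1..M. P0 m powr \<alpha>) = ?T"
      using split_sum_nat[OF NM, of "\<lambda>m. P0 m powr \<alpha>"] P0A[of "\<lambda>x. x powr \<alpha>"] P0B[of "\<lambda>x. x powr \<alpha>"]
      by simp
    have ex: "\<exists>P\<in>F. renyi_div (ereal \<alpha>) M P (uniform M) = 1 / (\<alpha> - 1) * ln ?T + ln (real M)"
      using P0F renyi_alpha[OF al Mpos, of P0] S0 Tpos by auto
    have lb: "1 / (\<alpha> - 1) * ln ?T + ln (real M) \<le> renyi_div (ereal \<alpha>) M P (uniform M)" if PF: "P \<in> F" for P
    proof -
      let ?S = "\<lambda>m. P m powr \<alpha>"
      have nnA': "\<And>m. m \<in> {1..N} \<Longrightarrow> 0 \<le> P m" using nnA[OF PF] NM by auto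
      have nnB': "\<And>m. m \<in> {Suc N..M} \<Longrightarrow> 0 \<le> P m" using nnA[OF PF] NM by auto
      have sB: "(\<Sum>m=Suc N..M. P m) = q" using PF feas by simp
      have neA: "{1..N} \<noteq> {}" using Npos by simp
      have spl: "(\<Sum>m=1..M. ?S m) = (\<Sum>m=1..N. ?S m) + (\<Sum>m=Suc N..M. ?S m)"
        by (rule split_sum_nat[OF NM])
      have avA: "sum P {1..N} / real (card {1..N}) = a" using sA[OF PF] by (simp add: a_def)
      have Spos: "0 < (\<Sum>m=1..M. ?S m)"
      proof -
        obtain m where m: "m \<in> {1..N}" "P m \<noteq> 0"
        proof (rule ccontr)
          assume "\<not> thesis"
          hence "\<forall>m\<in>{1..N}. P m = 0" using that by blast
          hence "sum P {1..N} = 0" by simp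
          thus False using sA[OF PF] q1 by simp
        qed
        have "0 < P m" using nnA'[OF m(1)] m(2) by linarith
        hence "0 < ?S m" by simp
        also have "?S m \<le> (\<Sum>m=1..M. ?S m)"
          by (rule member_le_sum) (use m NM in auto)
        finally show ?thesis .
      qed
      have val: "renyi_div (ereal \<alpha>) M P (uniform M) = 1 / (\<alpha> - 1) * ln (\<Sum>m=1..M. ?S m) + ln (real M)"
        by (rule renyi_alpha[OF al Mpos Spos])
      show ?thesis
      proof (cases "1 < \<alpha>")
        case True
        have gA: "real N * a powr \<alpha> \<le> (\<Sum>m=1..N. ?S m)"
          using group_gt1[of "{1..N}" P \<alpha>] nnA' neA True avA by simp
        have gB: "(real M - real N) * b powr \<alpha> \<le> (\<Sum>m=Suc N..M. ?S m)"
        proof (cases "q = 0")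
          case True
          hence "\<And>m. m \<in> {Suc N..M} \<Longrightarrow> P m = 0" using group_zero[of "{Suc N..M}" P] nnB' sB by auto
          thus ?thesis using True \<open>1 < \<alpha>\<close> by (simp add: b_def)
        next
          case False
          hence "{Suc N..M} \<noteq> {}" using sB by (metis sum.empty)
          thus ?thesis using group_gt1[of "{Suc N..M}" P \<alpha>] nnB' \<open>1 < \<alpha>\<close> sB cardB
            by (simp add: b_def)
        qed
        have "?T \<le> (\<Sum>m=1..M. ?S m)" using gA gB spl by simp
        hence "ln ?T \<le> ln (\<Sum>m=1..M. ?S m)" using Tpos by simp
        hence "1 / (\<alpha> - 1) * ln ?T \<le> 1 / (\<alpha> - 1) * ln (\<Sum>m=1..M. ?S m)"
          using True by (intro mult_left_mono) auto
        thus ?thesis using val by simp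
      next
        case False
        hence a1: "\<alpha> < 1" using al by simp
        have gA: "(\<Sum>m=1..N. ?S m) \<le> real N * a powr \<alpha>"
          using group_lt1[of "{1..N}" P \<alpha>] nnA' neA al a1 avA by simp
        have gB: "(\<Sum>m=Suc N..M. ?S m) \<le> (real M - real N) * b powr \<alpha>"
        proof (cases "q = 0")
          case True
          hence "\<And>m. m \<in> {Suc N..M} \<Longrightarrow> P m = 0" using group_zero[of "{Suc N..M}" P] nnB' sB by auto
          thus ?thesis using True by (simp add: b_def)
        next
          case False
          hence "{Suc N..M} \<noteq> {}" using sB by (metis sum.empty)
          thus ?thesis using group_lt1[of "{Suc N..M}" P \<alpha>] nnB' al a1 sB cardB
            by (simp add: b_def)
        qed
        have "(\<Sum>m=1..M. ?S m) \<le> ?T" using gA gB spl by simp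
        hence "ln (\<Sum>m=1..M. ?S m) \<le> ln ?T" using Spos by simp
        hence "1 / (\<alpha> - 1) * ln ?T \<le> 1 / (\<alpha> - 1) * ln (\<Sum>m=1..M. ?S m)"
          using a1 by (intro mult_left_mono_neg) auto
        thus ?thesis using val by simp
      qed
    qed
    show ?thesis unfolding is_min_val_def using ex lb by auto
  qed
  have partB: "is_min_val (\<lambda>P. renyi_div 1 M P (uniform M)) F
          ((1 - q) * ln a + (if q = 0 then 0 else q * ln b) + ln (real M))"
  proof -
    have v0: "(\<Sum>m=1..M. xlx (P0 m)) = (1 - q) * ln a + (if q = 0 then 0 else q * ln b)"
    proof -
      have "(\<Sum>m=1..M. xlx (P0 m)) = real N * xlx a + (real M - real N) * xlx b"
        using split_sum_nat[OF NM, of "\<lambda>m. xlx (P0 m)"] P0A[of xlx] P0B[of xlx] by simp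
      also have "real N * xlx a = (1 - q) * ln a" using apos Npos by (simp add: xlx_def a_def)
      also have "(real M - real N) * xlx b = (if q = 0 then 0 else q * ln b)"
        using MN by (auto simp: xlx_def b_def)
      finally show ?thesis .
    qed
    have ex: "\<exists>P\<in>F. renyi_div 1 M P (uniform M) = (1 - q) * ln a + (if q = 0 then 0 else q * ln b) + ln (real M)"
      using P0F renyi_one[OF Mpos, of P0] v0 feas by auto
    have lb: "(1 - q) * ln a + (if q = 0 then 0 else q * ln b) + ln (real M) \<le> renyi_div 1 M P (uniform M)"
      if PF: "P \<in> F" for P
    proof -
      have nnA': "\<And>m. m \<in> {1..N} \<Longrightarrow> 0 \<le> P m" using nnA[OF PF] NM by auto
      have nnB': "\<And>m. m \<in> {Suc N..M} \<Longrightarrow> 0 \<le> P m" using nnA[OF PF] NM by auto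
      have sB: "(\<Sum>m=Suc N..M. P m) = q" using PF feas by simp
      have neA: "{1..N} \<noteq> {}" using Npos by simp
      have gA: "(1 - q) * ln a \<le> (\<Sum>m=1..N. xlx (P m))"
        using group_xlx[of "{1..N}" P] nnA' neA sA[OF PF] q1 by (simp add: a_def)
      have gB: "(if q = 0 then 0 else q * ln b) \<le> (\<Sum>m=Suc N..M. xlx (P m))"
      proof (cases "q = 0")
        case True
        hence "\<And>m. m \<in> {Suc N..M} \<Longrightarrow> P m = 0" using group_zero[of "{Suc N..M}" P] nnB' sB by auto
        thus ?thesis using True by (simp add: xlx_def)
      next
        case False
        hence "{Suc N..M} \<noteq> {}" using sB by (metis sum.empty)
        thus ?thesis using group_xlx[of "{Suc N..M}" P] nnB' sB cardB False
          by (simp add: b_def)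
      qed
      have "renyi_div 1 M P (uniform M) = (\<Sum>m=1..M. xlx (P m)) + ln (real M)"
        using renyi_one[OF Mpos] PF feas by auto
      thus ?thesis using gA gB split_sum_nat[OF NM, of "\<lambda>m. xlx (P m)"] by simp
    qed
    show ?thesis unfolding is_min_val_def using ex lb by auto
  qed
  have partC: "is_min_val (\<lambda>P. renyi_div \<infinity> M P (uniform M)) F (ln a + ln (real M))"
  proof -
    have mx: "Max ((\<lambda>m. P0 m * real M) ` {1..M}) = a * real M"
    proof (rule Max_eqI)
      show "finite ((\<lambda>m. P0 m * real M) ` {1..M})" by simp
      show "y \<le> a * real M" if "y \<in> (\<lambda>m. P0 m * real M) ` {1..M}" for y
        using that ba Mpos by (auto simp: P0_def intro: mult_right_mono)
      show "a * real M \<in> (\<lambda>m. P0 m * real M) ` {1..M}"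
        using Npos NM by (auto simp: P0_def image_iff intro!: bexI[of _ 1])
    qed
    have ex: "\<exists>P\<in>F. renyi_div \<infinity> M P (uniform M) = ln a + ln (real M)"
      using P0F mx apos Mpos by (intro bexI[of _ P0]) (auto simp: renyi_inf ln_mult)
    have lb: "ln a + ln (real M) \<le> renyi_div \<infinity> M P (uniform M)" if PF: "P \<in> F" for P
    proof -
      obtain m where m: "m \<in> {1..N}" "a \<le> P m"
      proof (rule ccontr)
        assume "\<not> thesis"
        hence lt: "\<And>m. m \<in> {1..N} \<Longrightarrow> P m < a" using that by force
        have "(\<Sum>m=1..N. P m) < (\<Sum>m=1..N. a)"
          by (rule sum_strict_mono) (use lt Npos in auto)
        thus False using sA[OF PF] Npos by (simp add: a_def)
      qed
      have "a * real M \<le> P m * real M" using m Mpos by (simp add: mult_right_mono)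
      also have "\<dots> \<le> Max ((\<lambda>m. P m * real M) ` {1..M})"
        by (rule Max_ge) (use m NM in auto)
      finally have le: "a * real M \<le> Max ((\<lambda>m. P m * real M) ` {1..M})" .
      have pos: "0 < a * real M" using apos Mpos by simp
      have "ln (a * real M) \<le> ln (Max ((\<lambda>m. P m * real M) ` {1..M}))"
        using pos le by (meson ln_le_cancel_iff order_less_le_trans)
      thus ?thesis using apos Mpos by (simp add: renyi_inf ln_mult)
    qed
    show ?thesis unfolding is_min_val_def using ex lb by auto
  qed
  show ?thesis
    unfolding e0 e1 e2 F_def[symmetric] using partA partB partC by blast
qed

end
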